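(* Let $(X,\pi)$ be a finite symmetric two-player game with relative payoff game $(X,\Delta)$. If $(X,\Delta)$ has no pure saddle point, then imitation is subject to a money pump.
   Context: A symmetric two-player game $(X,\pi)$ has common action set $X$ and payoff $\pi:X\times X\to\mathbb{R}$ ($\pi(x,y)$ = payoff of the player choosing $x$ against $y$). Relative payoff: $\Delta(x,y)=\pi(x,y)-\pi(y,x)$; $(X,\Delta)$ is a zero-sum game where player 1 choosing $x$ against $y$ gets $\Delta(x,y)$. A pure saddle point is $(x^*,y^* )$ with $\Delta(x,y^* )\le\Delta(x^*,y^* )\le\Delta(x^*,y)$ for all $x,y\in X$. Imitate-the-best: given initial $y_0\in X$ and any opponent sequence $(x_t)_{t\ge0}$, $y_t=x_{t-1}$ if $\Delta(x_{t-1},y_{t-1})>0$ and $y_t=y_{t-1}$ otherwise. Imitation is not subject to a money pump if there is $M\in\mathbb{R}_+$ such that for every $y_0\in X$ and every sequence $(x_t)$, $\limsup_{T\to\infty}\sum_{t=0}^T\Delta(x_t,y_t)\le M$; otherwise it is subject to a money pump. *)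

theory Defs
  imports "HOL-Analysis.Analysis"
begin

definition rel_payoff :: "('a \<Rightarrow> 'a \<Rightarrow> real) \<Rightarrow> 'a \<Rightarrow> 'a \<Rightarrow> real" where
  "rel_payoff \<pi> x y = \<pi> x y - \<pi> y x"

definition pure_saddle_point :: "'a set \<Rightarrow> ('a \<Rightarrow> 'a \<Rightarrow> real) \<Rightarrow> 'a \<Rightarrow> 'a \<Rightarrow> bool" where
  "pure_saddle_point X D xs ys \<longleftrightarrow> xs \<in> X \<and> ys \<in> X \<and>
     (\<forall>x\<in>X. D x ys \<le> D xs ys) \<and> (\<forall>y\<in>X. D xs ys \<le> D xs y)"

fun imitate :: "('a \<Rightarrow> 'a \<Rightarrow> real) \<Rightarrow> 'a \<Rightarrow> (nat \<Rightarrow> 'a) \<Rightarrow> nat \<Rightarrow> 'a" where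
  "imitate D y0 x 0 = y0"
| "imitate D y0 x (Suc t) =
     (if D (x t) (imitate D y0 x t) > 0 then x t else imitate D y0 x t)"

definition not_subject_to_money_pump :: "'a set \<Rightarrow> ('a \<Rightarrow> 'a \<Rightarrow> real) \<Rightarrow> bool" where
  "not_subject_to_money_pump X \<pi> \<longleftrightarrow>
     (\<exists>M::real. M \<ge> 0 \<and> (\<forall>y0\<in>X. \<forall>x::nat \<Rightarrow> 'a. (\<forall>t. x t \<in> X) \<longrightarrow>
        limsup (\<lambda>T. ereal (\<Sum>t\<le>T. rel_payoff \<pi> (x t) (imitate (rel_payoff \<pi>) y0 x t)))
          \<le> ereal M))"

definition subject_to_money_pump :: "'a set \<Rightarrow> ('a \<Rightarrow> 'a \<Rightarrow> real) \<Rightarrow> bool" where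
  "subject_to_money_pump X \<pi> \<longleftrightarrow> \<not> not_subject_to_money_pump X \<pi>"

end

theory Submission
  imports Defs
begin

theorem proposition1:
  fixes X :: "'a set" and \<pi> :: "'a \<Rightarrow> 'a \<Rightarrow> real"
  assumes "finite X" and "X \<noteq> {}"
    and "\<not> (\<exists>xs ys. pure_saddle_point X (rel_payoff \<pi>) xs ys)"
  shows "subject_to_money_pump X \<pi>"
proof -
  define D where "D = rel_payoff \<pi>"
  have ex: "\<forall>y\<in>X. \<exists>x\<in>X. D x y > 0"
  proof
    fix y assume y: "y \<in> X"
    show "\<exists>x\<in>X. D x y > 0"
    proof (rule ccontr)
      assume "\<not> ?thesis"
      hence "pure_saddle_point X D y y" using y
        unfolding pure_saddle_point_def D_def rel_payoff_def by force
      thus False using assms(3) D_def by blast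
    qed
  qed
  then obtain f where f: "\<And>y. y \<in> X \<Longrightarrow> f y \<in> X \<and> D (f y) y > 0" by metis
  obtain y0 where y0: "y0 \<in> X" using assms(2) by blast
  define eps where "eps = Min ((\<lambda>y. D (f y) y) ` X)"
  have epspos: "eps > 0" unfolding eps_def using assms(1,2) f by (subst Min_gr_iff) auto
  have epsle: "\<And>y. y \<in> X \<Longrightarrow> eps \<le> D (f y) y" unfolding eps_def using assms(1) by auto
  define x where "x t = (f ^^ Suc t) y0" for t
  have inX: "\<And>t. (f ^^ t) y0 \<in> X" proof -
    fix t show "(f ^^ t) y0 \<in> X" by (induction t) (auto simp: y0 f)
  qed
  have xX: "\<forall>t. x t \<in> X" using inX x_def by metis
  have im: "\<And>t. imitate D y0 x t = (f ^^ t) y0"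
  proof -
    fix t show "imitate D y0 x t = (f ^^ t) y0"
      by (induction t) (auto simp: x_def f inX)
  qed
  have sumge: "\<And>T. real (Suc T) * eps \<le> (\<Sum>t\<le>T. D (x t) (imitate D y0 x t))"
  proof -
    fix T
    have "(\<Sum>t\<le>T. eps) \<le> (\<Sum>t\<le>T. D (x t) (imitate D y0 x t))"
      by (rule sum_mono) (auto simp: im x_def inX epsle)
    thus "real (Suc T) * eps \<le> (\<Sum>t\<le>T. D (x t) (imitate D y0 x t))" by simp
  qed
  show ?thesis unfolding subject_to_money_pump_def not_subject_to_money_pump_def
  proof
    assume "\<exists>M\<ge>0. \<forall>y0\<in>X. \<forall>x. (\<forall>t. x t \<in> X) \<longrightarrow>
      limsup (\<lambda>T. ereal (\<Sum>t\<le>T. rel_payoff \<pi> (x t) (imitate (rel_payoff \<pi>) y0 x t))) \<le> ereal M"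
    then obtain M where M: "limsup (\<lambda>T. ereal (\<Sum>t\<le>T. D (x t) (imitate D y0 x t))) \<le> ereal M"
      using y0 xX D_def by blast
    obtain T0 :: nat where T0: "(M + 1) / eps < T0" using reals_Archimedean2 by blast
    have "eventually (\<lambda>T. ereal (M+1) \<le> ereal (\<Sum>t\<le>T. D (x t) (imitate D y0 x t))) sequentially"
    proof (rule eventually_sequentiallyI[of T0])
      fix T assume "T0 \<le> T"
      hence "M + 1 < real (Suc T) * eps" using T0 epspos
        by (simp add: divide_less_eq) (smt (verit) mult_right_mono of_nat_le_iff)
      thus "ereal (M+1) \<le> ereal (\<Sum>t\<le>T. D (x t) (imitate D y0 x t))" using sumge[of T] by simp
    qed
    hence "ereal (M+1) \<le> liminf (\<lambda>T. ereal (\<Sum>t\<le>T. D (x t) (imitate D y0 x t)))"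
      by (rule Liminf_bounded)
    also have "\<dots> \<le> limsup (\<lambda>T. ereal (\<Sum>t\<le>T. D (x t) (imitate D y0 x t)))"
      by (rule Liminf_le_Limsup) simp
    finally have "ereal (M+1) \<le> ereal M" using M by (rule order_trans)
    thus False by simp
  qed
qed

end
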